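(* Given a connected conjunctive query $q$ and $\varepsilon<1-1/\tau^*(q)$, there exists an algorithm that runs in one round in $\mathrm{MPC}(\varepsilon)$ and reports $\Theta\!\left(\mathbf E[|q(I)|]/p^{\tau^*(q)(1-\varepsilon)-1}\right)$ correct answers in expectation on matching databases.
   Context: Conjunctive queries $q(x_1,\ldots,x_k)=S_1(\bar x_1),\ldots,S_\ell(\bar x_\ell)$ are full and self-join-free; connected means the hypergraph (variables as vertices, hyperedge $\mathrm{vars}(S_j)$ per atom) is connected. $\tau^*(q)=\min\sum_iv_i$ over $v_i\ge0$ with $\sum_{i:x_i\in\mathrm{vars}(S_j)}v_i\ge1$ for all $j$. A matching database over $[n]$: each $S_j$ has exactly $n$ tuples and each column contains each value of $[n]$ exactly once; $\mathbf E[|q(I)|]$ is over a uniformly random matching database. $\mathrm{MPC}(\varepsilon)$: $p$ servers of unlimited power, private channels, rounds of computation and communication, each server receiving $O(N/p^{1-\varepsilon})$ bits ($O(n/p^{1-\varepsilon})$ tuples) per round, shared randomness. *)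

theory Defs
  imports "HOL-Probability.Probability"
begin

(* A full self-join-free conjunctive query with variables 0..<k is given by the
   list of its atoms; atom j (relation symbol S_j) is the list of its variables. *)

definition wf_query :: "nat \<Rightarrow> nat list list \<Rightarrow> bool" where
  "wf_query k atoms \<longleftrightarrow> atoms \<noteq> [] \<and>
     (\<forall>a \<in> set atoms. a \<noteq> [] \<and> distinct a \<and> set a \<subseteq> {0..<k}) \<and>
     (\<forall>x<k. \<exists>a \<in> set atoms. x \<in> set a)"

definition query_adj :: "nat list list \<Rightarrow> (nat \<times> nat) set" where
  "query_adj atoms = {(u, v). \<exists>a \<in> set atoms. u \<in> set a \<and> v \<in> set a}"

definition connected_query :: "nat \<Rightarrow> nat list list \<Rightarrow> bool" where
  "connected_query k atoms \<longleftrightarrow> (\<forall>x<k. \<forall>y<k. (x, y) \<in> (query_adj atoms)\<^sup>*)"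

definition frac_vertex_cover :: "nat list list \<Rightarrow> (nat \<Rightarrow> real) \<Rightarrow> bool" where
  "frac_vertex_cover atoms v \<longleftrightarrow> (\<forall>i. 0 \<le> v i) \<and>
     (\<forall>a \<in> set atoms. (\<Sum>i\<in>set a. v i) \<ge> 1)"

definition tau_star :: "nat \<Rightarrow> nat list list \<Rightarrow> real" where
  "tau_star k atoms = Inf {(\<Sum>i<k. v i) | v. frac_vertex_cover atoms v}"

definition tuples :: "nat \<Rightarrow> nat \<Rightarrow> nat list set" where
  "tuples n r = {t. length t = r \<and> set t \<subseteq> {0..<n}}"

definition matching_rel :: "nat \<Rightarrow> nat \<Rightarrow> nat list set \<Rightarrow> bool" where
  "matching_rel n r S \<longleftrightarrow> S \<subseteq> tuples n r \<and> card S = n \<and>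
     (\<forall>i<r. bij_betw (\<lambda>t. t ! i) S {0..<n})"

definition matching_dbs :: "nat list list \<Rightarrow> nat \<Rightarrow> (nat \<Rightarrow> nat list set) set" where
  "matching_dbs atoms n = {D. (\<forall>j<length atoms. matching_rel n (length (atoms ! j)) (D j)) \<and>
                              (\<forall>j\<ge>length atoms. D j = {})}"

definition answers :: "nat \<Rightarrow> nat list list \<Rightarrow> (nat \<Rightarrow> nat list set) \<Rightarrow> nat list set" where
  "answers k atoms D = {xs. length xs = k \<and>
     (\<forall>j<length atoms. map (\<lambda>x. xs ! x) (atoms ! j) \<in> D j)}"

definition expected_answers :: "nat \<Rightarrow> nat list list \<Rightarrow> nat \<Rightarrow> real" where
  "expected_answers k atoms n =
     measure_pmf.expectation (pmf_of_set (matching_dbs atoms n))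
       (\<lambda>D. real (card (answers k atoms D)))"

(* One-round MPC(eps) algorithm (with each input relation S_j held by its own
   input server, shared randomness).  The shared randomness is modelled as a
   random choice (pmf R) of a message function F: F j s S is the set of tuples
   of relation S_j = S that is sent to server s < p.  Every server receives at
   most C * n / p^(1-eps) tuples in the round. *)
definition one_round_mpc ::
  "nat list list \<Rightarrow> nat \<Rightarrow> nat \<Rightarrow> real \<Rightarrow> real \<Rightarrow>
   (nat \<Rightarrow> nat \<Rightarrow> nat list set \<Rightarrow> nat list set) pmf \<Rightarrow> bool" where
  "one_round_mpc atoms n p eps C R \<longleftrightarrow> 0 \<le> eps \<and> eps < 1 \<and>
     (\<forall>F \<in> set_pmf R.
        (\<forall>j<length atoms. \<forall>s<p. \<forall>S. F j s S \<subseteq> S) \<and>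
        (\<forall>D. (\<forall>j<length atoms. D j \<subseteq> tuples n (length (atoms ! j))) \<longrightarrow>
           (\<forall>s<p. real (\<Sum>j<length atoms. card (F j s (D j))) \<le> C * real n / real p powr (1 - eps))))"

(* Answers reported by the algorithm: every server s < p reports the answers of q
   on the data it received (these are correct answers, since received tuples are
   genuine input tuples); we count distinct reported answers. *)
definition reported :: "nat \<Rightarrow> nat list list \<Rightarrow> nat \<Rightarrow>
   (nat \<Rightarrow> nat \<Rightarrow> nat list set \<Rightarrow> nat list set) \<Rightarrow> (nat \<Rightarrow> nat list set) \<Rightarrow> nat list set" where
  "reported k atoms p F D = (\<Union>s<p. answers k atoms (\<lambda>j. F j s (D j)))"

definition expected_reported :: "nat \<Rightarrow> nat list list \<Rightarrow> nat \<Rightarrow> nat \<Rightarrow>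
   (nat \<Rightarrow> nat \<Rightarrow> nat list set \<Rightarrow> nat list set) pmf \<Rightarrow> real" where
  "expected_reported k atoms n p R =
     measure_pmf.expectation (pmf_of_set (matching_dbs atoms n))
       (\<lambda>D. measure_pmf.expectation R (\<lambda>F. real (card (reported k atoms p F D))))"

end

theory Submission
  imports Defs
begin


lemma tau_attained:
  assumes wf: "wf_query k atoms"
  shows "\<exists>v. frac_vertex_cover atoms v \<and> (\<Sum>i<k. v i) = tau_star k atoms"
proof -
  define K :: "(nat \<Rightarrow> real) set" where "K = PiE UNIV (\<lambda>i. if i<k then {0..1} else {0})"
  define Fe :: "(nat \<Rightarrow> real) set" where "Fe = (\<Inter>a\<in>set atoms. {v. 1 \<le> (\<Sum>i\<in>set a. v i)})"
  have "compactin (product_topology (\<lambda>i. euclidean) UNIV) K"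
    unfolding K_def by (subst compactin_PiE) auto
  hence cK: "compact K" by (simp add: euclidean_product_topology)
  have cF: "closed Fe" unfolding Fe_def
    by (intro closed_INT ballI closed_Collect_le continuous_on_const continuous_on_sum) auto
  define S where "S = K \<inter> Fe"
  have cS: "compact S" unfolding S_def using cK cF by (rule compact_Int_closed)
  define one :: "nat \<Rightarrow> real" where "one = (\<lambda>i. if i<k then 1 else 0)"
  have atomsk: "\<And>a. a \<in> set atoms \<Longrightarrow> a \<noteq> [] \<and> set a \<subseteq> {0..<k}"
    using wf unfolding wf_query_def by auto
  have "one \<in> S"
  proof -
    have "one \<in> K" unfolding K_def one_def by auto
    moreover have "one \<in> Fe"
    proof -
      { fix a assume a: "a \<in> set atoms"
        have "a \<noteq> []" using atomsk[OF a] by auto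
        then obtain x where x: "x \<in> set a" by (cases a) auto
        have "(\<Sum>i\<in>set a. one i) = card (set a)"
          proof -
          have "(\<Sum>i\<in>set a. one i) = (\<Sum>i\<in>set a. 1)"
            using atomsk[OF a] unfolding one_def by (intro sum.cong) auto
          thus ?thesis by simp
        qed
        moreover have "card (set a) \<ge> 1" using x by (metis One_nat_def Suc_leI card_gt_0_iff empty_iff finite_set)
        ultimately have "1 \<le> (\<Sum>i\<in>set a. one i)" by simp }
      thus ?thesis unfolding Fe_def by auto
    qed
    ultimately show ?thesis unfolding S_def by auto
  qed
  hence Sne: "S \<noteq> {}" by auto
  have ctn: "continuous_on S (\<lambda>v. \<Sum>i<k. v i)"
    by (intro continuous_on_sum) (auto intro: continuous_on_subset[OF continuous_on_product_coordinates])
  obtain v where vS: "v \<in> S" and vmin: "\<And>w. w \<in> S \<Longrightarrow> (\<Sum>i<k. v i) \<le> (\<Sum>i<k. w i)"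
    using continuous_attains_inf[OF cS Sne ctn] by auto
  have cov_iff: "\<And>w. w \<in> S \<Longrightarrow> frac_vertex_cover atoms w"
    unfolding S_def K_def Fe_def frac_vertex_cover_def
    by (auto simp: PiE_iff split: if_splits)
  have vcov: "frac_vertex_cover atoms v" using cov_iff vS by auto
  have "tau_star k atoms = (\<Sum>i<k. v i)"
    unfolding tau_star_def
  proof (rule cInf_eq_minimum)
    show "(\<Sum>i<k. v i) \<in> {\<Sum>i<k. v i |v. frac_vertex_cover atoms v}" using vcov by auto
  next
    fix x assume "x \<in> {\<Sum>i<k. v i |v. frac_vertex_cover atoms v}"
    then obtain w where w: "frac_vertex_cover atoms w" and x: "x = (\<Sum>i<k. w i)" by auto
    define w' where "w' = (\<lambda>i. if i<k then min (w i) 1 else 0)"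
    have w0: "\<And>i. 0 \<le> w i" using w unfolding frac_vertex_cover_def by auto
    have "w' \<in> K" unfolding K_def w'_def using w0 by auto
    moreover have "w' \<in> Fe"
    proof -
      { fix a assume a: "a \<in> set atoms"
        have ge: "1 \<le> (\<Sum>i\<in>set a. w i)" using w a unfolding frac_vertex_cover_def by auto
        have "1 \<le> (\<Sum>i\<in>set a. w' i)"
        proof (cases "\<exists>i\<in>set a. w i \<ge> 1")
          case True
          then obtain j where j: "j \<in> set a" "w j \<ge> 1" by auto
          have "j < k" using atomsk[OF a] j by auto
          have "w' j = 1" using j \<open>j<k\<close> unfolding w'_def by auto
          moreover have "(\<Sum>i\<in>set a. w' i) \<ge> w' j"
            by (rule member_le_sum) (use j w0 in \<open>auto simp: w'_def\<close>)
          ultimately show ?thesis by simp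
        next
          case False
          have "(\<Sum>i\<in>set a. w' i) = (\<Sum>i\<in>set a. w i)"
            using False atomsk[OF a] by (intro sum.cong) (auto simp: w'_def)
          thus ?thesis using ge by simp
        qed }
      thus ?thesis unfolding Fe_def by auto
    qed
    ultimately have "w' \<in> S" unfolding S_def by auto
    hence "(\<Sum>i<k. v i) \<le> (\<Sum>i<k. w' i)" by (rule vmin)
    also have "\<dots> \<le> (\<Sum>i<k. w i)" by (intro sum_mono) (auto simp: w'_def)
    finally show "(\<Sum>i<k. v i) \<le> x" using x by simp
  qed
  thus ?thesis using vcov by auto
qed




definition Hp :: "nat \<Rightarrow> nat \<Rightarrow> (nat \<Rightarrow> nat) \<Rightarrow> (nat \<times> nat \<Rightarrow> nat) pmf" where
  "Hp k n g = Pi_pmf ({..<k} \<times> {..<n}) 0 (\<lambda>z. pmf_of_set {..<g (fst z)})"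

lemma prob_fix:
  assumes Z: "Z \<subseteq> {..<k} \<times> {..<n}" and y: "\<And>z. z \<in> Z \<Longrightarrow> y z < g (fst z)"
  shows "measure_pmf.prob (Hp k n g) {h. \<forall>z\<in>Z. h z = y z} = (\<Prod>z\<in>Z. 1 / real (g (fst z)))"
proof -
  define A where "A = {..<k} \<times> {..<n}"
  define B where "B = (\<lambda>z. if z \<in> Z then {y z} else (UNIV :: nat set))"
  have fA: "finite A" unfolding A_def by auto
  have eq: "{h. \<forall>z\<in>Z. h z = y z} = Pi A B"
    using Z unfolding A_def B_def Pi_def by auto
  have "measure_pmf.prob (Hp k n g) {h. \<forall>z\<in>Z. h z = y z}
        = (\<Prod>z\<in>A. measure_pmf.prob (pmf_of_set {..<g (fst z)}) (B z))"
    unfolding eq Hp_def A_def[symmetric] by (rule measure_Pi_pmf_Pi[OF fA])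
  also have "\<dots> = (\<Prod>z\<in>A. if z \<in> Z then 1 / real (g (fst z)) else 1)"
  proof (intro prod.cong refl)
    fix z assume "z \<in> A"
    show "measure_pmf.prob (pmf_of_set {..<g (fst z)}) (B z) = (if z \<in> Z then 1 / real (g (fst z)) else 1)"
    proof (cases "z \<in> Z")
      case True
      have gz: "g (fst z) > 0" using y[OF True] by auto
      hence ne: "{..<g (fst z)} \<noteq> {}" by auto
      have "{..<g (fst z)} \<inter> {y z} = {y z}" using y[OF True] by auto
      thus ?thesis using True measure_pmf_of_set[OF ne, of "{y z}"] by (simp add: B_def)
    next
      case False
      thus ?thesis by (simp add: B_def)
    qed
  qed
  also have "\<dots> = (\<Prod>z\<in>Z. 1 / real (g (fst z)))"
    using Z fA unfolding A_def by (subst prod.If_cases) (auto simp: Int_absorb1 intro!: prod.neutral)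
  finally show ?thesis .
qed




definition inbox :: "(nat \<times> nat \<Rightarrow> nat) \<Rightarrow> nat list \<Rightarrow> (nat \<Rightarrow> nat) \<Rightarrow> nat list \<Rightarrow> bool" where
  "inbox h a cv t \<longleftrightarrow> (\<forall>m<length a. h (a!m, t!m) = cv (a!m))"

definition Bsel :: "nat list list \<Rightarrow> (nat \<Rightarrow> nat \<Rightarrow> nat) \<Rightarrow> (nat \<times> nat \<Rightarrow> nat) \<Rightarrow> nat \<Rightarrow> nat \<Rightarrow> nat list set \<Rightarrow> nat list set" where
  "Bsel atoms \<sigma> h j s S = {t\<in>S. inbox h (atoms!j) (\<sigma> s) t}"

definition mkF :: "real \<Rightarrow> nat list list \<Rightarrow> (nat \<Rightarrow> nat \<Rightarrow> nat) \<Rightarrow> (nat \<times> nat \<Rightarrow> nat) \<Rightarrow> nat \<Rightarrow> nat \<Rightarrow> nat list set \<Rightarrow> nat list set" where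
  "mkF T atoms \<sigma> h j s S = (if real (card (Bsel atoms \<sigma> h j s S)) \<le> T then Bsel atoms \<sigma> h j s S else {})"

definition Ev :: "nat \<Rightarrow> nat list \<Rightarrow> (nat \<Rightarrow> nat) \<Rightarrow> (nat \<times> nat \<Rightarrow> nat) set" where
  "Ev k c cv = {h. \<forall>i<k. h (i, c!i) = cv i}"

lemma match_facts:
  assumes "D \<in> matching_dbs atoms n" "j < length atoms"
  shows "finite (D j)" "card (D j) = n" "D j \<subseteq> tuples n (length (atoms!j))"
    "\<And>t t' m. t \<in> D j \<Longrightarrow> t' \<in> D j \<Longrightarrow> t \<noteq> t' \<Longrightarrow> m < length (atoms!j) \<Longrightarrow> t!m \<noteq> t'!m"
proof -
  have mr: "matching_rel n (length (atoms!j)) (D j)" using assms unfolding matching_dbs_def by auto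
  have ft: "finite (tuples n r)" for r
  proof -
    have "tuples n r = {xs. set xs \<subseteq> {0..<n} \<and> length xs = r}" unfolding tuples_def by auto
    thus ?thesis by (simp add: finite_lists_length_eq)
  qed
  show sub: "D j \<subseteq> tuples n (length (atoms!j))" using mr unfolding matching_rel_def by auto
  show "finite (D j)" using sub ft finite_subset by blast
  show "card (D j) = n" using mr unfolding matching_rel_def by auto
  fix t t' m assume "t \<in> D j" "t' \<in> D j" "t \<noteq> t'" "m < length (atoms!j)"
  moreover have "inj_on (\<lambda>t. t!m) (D j)" using mr \<open>m < length (atoms!j)\<close>
    unfolding matching_rel_def bij_betw_def by auto
  ultimately show "t!m \<noteq> t'!m" by (auto dest: inj_onD)
qed

lemma ans_facts:
  assumes wf: "wf_query k atoms" and D: "D \<in> matching_dbs atoms n"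
  shows "\<And>c i. c \<in> answers k atoms D \<Longrightarrow> i < k \<Longrightarrow> c!i < n"
    and "finite (answers k atoms D)"
proof -
  show lt: "c!i < n" if c: "c \<in> answers k atoms D" and i: "i < k" for c i
  proof -
    obtain a where a: "a \<in> set atoms" "i \<in> set a" using wf i unfolding wf_query_def by auto
    then obtain j where j: "j < length atoms" "atoms!j = a" by (auto simp: in_set_conv_nth)
    obtain m where m: "m < length a" "a!m = i" using a by (auto simp: in_set_conv_nth)
    have "map (\<lambda>x. c!x) a \<in> D j" using c j unfolding answers_def by auto
    hence "map (\<lambda>x. c!x) a \<in> tuples n (length a)" using match_facts(3)[OF D j(1)] j by auto
    hence "(map (\<lambda>x. c!x) a) ! m < n" using m unfolding tuples_def
      by (auto dest!: subsetD[where c="(map (\<lambda>x. c!x) a) ! m"] simp: nth_mem)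
    thus ?thesis using m by simp
  qed
  have "answers k atoms D \<subseteq> {xs. set xs \<subseteq> {0..<n} \<and> length xs = k}"
  proof
    fix c assume c: "c \<in> answers k atoms D"
    hence "length c = k" unfolding answers_def by auto
    thus "c \<in> {xs. set xs \<subseteq> {0..<n} \<and> length xs = k}"
      using lt[OF c] by (auto simp: in_set_conv_nth)
  qed
  thus "finite (answers k atoms D)" by (rule finite_subset) (simp add: finite_lists_length_eq)
qed

lemma rep_imp:
  assumes wf: "wf_query k atoms"
    and c: "c \<in> reported k atoms p (mkF T atoms \<sigma> h) D"
  shows "c \<in> answers k atoms D \<and> (\<exists>s<p. h \<in> Ev k c (\<sigma> s))"
proof -
  obtain s where s: "s < p" and cs: "c \<in> answers k atoms (\<lambda>j. mkF T atoms \<sigma> h j s (D j))"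
    using c unfolding reported_def by auto
  have sub: "mkF T atoms \<sigma> h j s S \<subseteq> Bsel atoms \<sigma> h j s S" for j S
    unfolding mkF_def by auto
  have "c \<in> answers k atoms D"
    using cs sub unfolding answers_def Bsel_def by blast
  moreover have "h \<in> Ev k c (\<sigma> s)"
    unfolding Ev_def
  proof (intro CollectI allI impI)
    fix i assume i: "i < k"
    obtain a where a: "a \<in> set atoms" "i \<in> set a" using wf i unfolding wf_query_def by auto
    then obtain j where j: "j < length atoms" "atoms!j = a" by (auto simp: in_set_conv_nth)
    obtain m where m: "m < length a" "a!m = i" using a by (auto simp: in_set_conv_nth)
    have "map (\<lambda>x. c!x) a \<in> Bsel atoms \<sigma> h j s (D j)" using cs sub j unfolding answers_def by blast
    hence "inbox h a (\<sigma> s) (map (\<lambda>x. c!x) a)" using j unfolding Bsel_def by auto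
    thus "h (i, c!i) = \<sigma> s i" using m unfolding inbox_def by auto
  qed
  ultimately show ?thesis using s by auto
qed

lemma rep_if:
  assumes wf: "wf_query k atoms"
    and c: "c \<in> answers k atoms D" and s: "s < p" and h: "h \<in> Ev k c (\<sigma> s)"
    and good: "\<forall>j<length atoms. real (card (Bsel atoms \<sigma> h j s (D j))) \<le> T"
  shows "c \<in> reported k atoms p (mkF T atoms \<sigma> h) D"
proof -
  have "c \<in> answers k atoms (\<lambda>j. mkF T atoms \<sigma> h j s (D j))"
    unfolding answers_def
  proof (intro CollectI conjI allI impI)
    show "length c = k" using c unfolding answers_def by auto
    fix j assume j: "j < length atoms"
    have ak: "set (atoms!j) \<subseteq> {0..<k}" using wf j unfolding wf_query_def by auto
    have "inbox h (atoms!j) (\<sigma> s) (map (\<lambda>x. c!x) (atoms!j))"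
      unfolding inbox_def
    proof (intro allI impI)
      fix m assume m: "m < length (atoms!j)"
      have "atoms!j!m \<in> set (atoms!j)" using m by (rule nth_mem)
      hence "atoms!j!m < k" using ak by auto
      thus "h (atoms!j!m, map (\<lambda>x. c!x) (atoms!j) ! m) = \<sigma> s (atoms!j!m)"
        using h m unfolding Ev_def by simp
    qed
    moreover have "map (\<lambda>x. c!x) (atoms!j) \<in> D j" using c j unfolding answers_def by auto
    ultimately have "map (\<lambda>x. c!x) (atoms!j) \<in> Bsel atoms \<sigma> h j s (D j)" unfolding Bsel_def by auto
    thus "map (\<lambda>x. c!x) (atoms!j) \<in> mkF T atoms \<sigma> h j s (D j)"
      using good j unfolding mkF_def by auto
  qed
  thus ?thesis using s unfolding reported_def by auto
qed




lemma finH: assumes "\<forall>i. 1 \<le> g i" shows "finite (set_pmf (Hp k n g))"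
proof -
  have "set_pmf (Hp k n g) = PiE_dflt ({..<k} \<times> {..<n}) 0 (set_pmf \<circ> (\<lambda>z. pmf_of_set {..<g (fst z)}))"
    unfolding Hp_def by (rule set_Pi_pmf) auto
  also have "finite \<dots>"
  proof (rule finite_PiE_dflt)
    fix z :: "nat \<times> nat"
    have "{..<g (fst z)} \<noteq> {}" using assms by (metis lessThan_empty_iff not_one_le_zero)
    thus "finite ((set_pmf \<circ> (\<lambda>z. pmf_of_set {..<g (fst z)})) z)" by simp
  qed auto
  finally show ?thesis .
qed

lemma probEv:
  assumes cn: "\<forall>i<k. c!i < n" and cv: "\<forall>i<k. cv i < g i"
  shows "measure_pmf.prob (Hp k n g) (Ev k c cv) = 1 / (\<Prod>i<k. real (g i))"
proof -
  define Z where "Z = (\<lambda>i. (i, c!i)) ` {..<k}"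
  have eq: "Ev k c cv = {h. \<forall>z\<in>Z. h z = (\<lambda>z. cv (fst z)) z}" unfolding Ev_def Z_def by auto
  have "measure_pmf.prob (Hp k n g) (Ev k c cv) = (\<Prod>z\<in>Z. 1 / real (g (fst z)))"
    unfolding eq by (rule prob_fix) (use cn cv in \<open>auto simp: Z_def\<close>)
  also have "\<dots> = (\<Prod>i<k. 1 / real (g i))"
    unfolding Z_def by (subst prod.reindex) (auto simp: inj_on_def)
  also have "\<dots> = 1 / (\<Prod>i<k. real (g i))" by (simp add: prod_dividef)
  finally show ?thesis .
qed

lemma probEvIn:
  assumes a: "distinct a" "set a \<subseteq> {..<k}" and t: "length t = length a"
    and tn: "\<forall>m<length a. t!m < n \<and> t!m \<noteq> c!(a!m)"
    and cn: "\<forall>i<k. c!i < n" and cv: "\<forall>i<k. cv i < g i"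
  shows "measure_pmf.prob (Hp k n g) (Ev k c cv \<inter> {h. inbox h a cv t})
     = 1 / (\<Prod>i<k. real (g i)) * (1 / (\<Prod>m<length a. real (g (a!m))))"
proof -
  define Z1 where "Z1 = (\<lambda>i. (i, c!i)) ` {..<k}"
  define Z2 where "Z2 = (\<lambda>m. (a!m, t!m)) ` {..<length a}"
  have am: "\<And>m. m < length a \<Longrightarrow> a!m < k" using a(2) nth_mem by fastforce
  have eq: "Ev k c cv \<inter> {h. inbox h a cv t} = {h. \<forall>z\<in>Z1 \<union> Z2. h z = (\<lambda>z. cv (fst z)) z}"
    unfolding Ev_def Z1_def Z2_def inbox_def by auto
  have "measure_pmf.prob (Hp k n g) (Ev k c cv \<inter> {h. inbox h a cv t}) = (\<Prod>z\<in>Z1 \<union> Z2. 1 / real (g (fst z)))"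
    unfolding eq by (rule prob_fix) (use cn cv tn am in \<open>auto simp: Z1_def Z2_def\<close>)
  also have "\<dots> = (\<Prod>z\<in>Z1. 1 / real (g (fst z))) * (\<Prod>z\<in>Z2. 1 / real (g (fst z)))"
  proof (rule prod.union_disjoint)
    show "Z1 \<inter> Z2 = {}" using tn unfolding Z1_def Z2_def by auto
  qed (auto simp: Z1_def Z2_def)
  also have "(\<Prod>z\<in>Z1. 1 / real (g (fst z))) = (\<Prod>i<k. 1 / real (g i))"
    unfolding Z1_def by (subst prod.reindex) (auto simp: inj_on_def)
  also have "(\<Prod>z\<in>Z2. 1 / real (g (fst z))) = (\<Prod>m<length a. 1 / real (g (a!m)))"
    unfolding Z2_def using a(1) by (subst prod.reindex) (auto simp: inj_on_def nth_eq_iff_index_eq)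
  finally show ?thesis by (simp add: prod_dividef)
qed




context
  fixes k n p :: nat and atoms :: "nat list list" and g :: "nat \<Rightarrow> nat"
    and \<sigma> :: "nat \<Rightarrow> nat \<Rightarrow> nat" and T :: real
  assumes wf: "wf_query k atoms"
    and g1: "\<forall>i. 1 \<le> g i"
    and \<sigma>g: "\<forall>s<p. \<forall>i<k. \<sigma> s i < g i"
    and \<sigma>inj: "\<forall>s<p. \<forall>s'<p. s \<noteq> s' \<longrightarrow> (\<exists>i<k. \<sigma> s i \<noteq> \<sigma> s' i)"
    and Tpos: "T > 0"
    and Tbig: "\<forall>j<length atoms. 2 * real (length atoms) *
                 (1 + real n / (\<Prod>m<length (atoms!j). real (g (atoms!j!m)))) \<le> T"
begin

abbreviation "H \<equiv> Hp k n g"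
definition "Gr = (\<Prod>i<k. real (g i))"

lemma Gr_pos: "Gr > 0" unfolding Gr_def using g1 by (intro prod_pos) (auto intro: less_le_trans[of 0 1])

lemma intH: "integrable (measure_pmf H) (f :: _ \<Rightarrow> real)"
  by (rule integrable_measure_pmf_finite[OF finH[OF g1]])

lemma over_bound:
  assumes D: "D \<in> matching_dbs atoms n" and c: "c \<in> answers k atoms D" and s: "s < p"
    and j: "j < length atoms"
  shows "measure_pmf.prob H (Ev k c (\<sigma> s) \<inter> {h. T < real (card (Bsel atoms \<sigma> h j s (D j)))})
           \<le> 1 / (2 * real (length atoms) * Gr)"
proof -
  define a where "a = atoms!j"
  define E where "E = Ev k c (\<sigma> s)"
  define In where "In t = {h. inbox h a (\<sigma> s) t}" for t
  define P where "P = (\<Prod>m<length a. real (g (a!m)))"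
  define u where "u = map (\<lambda>x. c!x) a"
  have aset: "a \<in> set atoms" unfolding a_def using j by simp
  have adist: "distinct a" and ak: "set a \<subseteq> {..<k}" using wf aset unfolding wf_query_def atLeast0LessThan by auto
  have fD: "finite (D j)" and cardD: "card (D j) = n" and subD: "D j \<subseteq> tuples n (length a)"
    using match_facts[OF D j] unfolding a_def by auto
  have uD: "u \<in> D j" using c j unfolding answers_def u_def a_def by auto
  have cn: "\<forall>i<k. c!i < n" using ans_facts(1)[OF wf D c] by auto
  have cv: "\<forall>i<k. \<sigma> s i < g i" using \<sigma>g s by auto
  have Ppos: "P > 0" unfolding P_def using g1 by (intro prod_pos) (auto intro: less_le_trans[of 0 1])
  have X: "real (card (Bsel atoms \<sigma> h j s (D j))) = (\<Sum>t\<in>D j. indicator (In t) h)" for h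
  proof -
    have "(\<Sum>t\<in>D j. indicator (In t) h) = (\<Sum>t\<in>D j. if inbox h a (\<sigma> s) t then 1 else (0::real))"
      unfolding In_def indicator_def by (intro sum.cong) auto
    also have "\<dots> = real (card {t \<in> D j. inbox h a (\<sigma> s) t})"
      using fD by (simp add: sum.If_cases Int_def)
    finally show ?thesis unfolding Bsel_def a_def by simp
  qed
  have pt: "T * indicator (E \<inter> {h. T < real (card (Bsel atoms \<sigma> h j s (D j)))}) h
            \<le> (\<Sum>t\<in>D j. indicator (E \<inter> In t) h)" for h
  proof (cases "h \<in> E \<and> T < real (card (Bsel atoms \<sigma> h j s (D j)))")
    case True
    hence "T * indicator (E \<inter> {h. T < real (card (Bsel atoms \<sigma> h j s (D j)))}) h
           \<le> real (card (Bsel atoms \<sigma> h j s (D j)))" by auto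
    also have "\<dots> = (\<Sum>t\<in>D j. indicator (E \<inter> In t) h)" unfolding X using True
      by (intro sum.cong) (auto simp: indicator_def)
    finally show ?thesis .
  next
    case False
    thus ?thesis by (auto intro!: sum_nonneg simp: indicator_def)
  qed
  have "T * measure_pmf.prob H (E \<inter> {h. T < real (card (Bsel atoms \<sigma> h j s (D j)))})
        = measure_pmf.expectation H (\<lambda>h. T * indicator (E \<inter> {h. T < real (card (Bsel atoms \<sigma> h j s (D j)))}) h)"
    by simp
  also have "\<dots> \<le> measure_pmf.expectation H (\<lambda>h. \<Sum>t\<in>D j. indicator (E \<inter> In t) h)"
    by (intro integral_mono intH pt)
  also have "\<dots> = (\<Sum>t\<in>D j. measure_pmf.prob H (E \<inter> In t))"
    by (subst Bochner_Integration.integral_sum[OF intH]) simp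
  also have "\<dots> = measure_pmf.prob H (E \<inter> In u) + (\<Sum>t\<in>D j - {u}. measure_pmf.prob H (E \<inter> In t))"
    using fD uD by (simp add: sum.remove)
  also have "\<dots> \<le> 1 / Gr + (\<Sum>t\<in>D j - {u}. 1 / Gr * (1 / P))"
  proof (rule add_mono)
    have "measure_pmf.prob H (E \<inter> In u) \<le> measure_pmf.prob H E"
      by (rule measure_pmf.finite_measure_mono) auto
    also have "\<dots> = 1 / Gr" unfolding E_def Gr_def by (rule probEv[OF cn cv])
    finally show "measure_pmf.prob H (E \<inter> In u) \<le> 1 / Gr" .
  next
    show "(\<Sum>t\<in>D j - {u}. measure_pmf.prob H (E \<inter> In t)) \<le> (\<Sum>t\<in>D j - {u}. 1 / Gr * (1 / P))"
    proof (rule sum_mono)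
      fix t assume t: "t \<in> D j - {u}"
      have tl: "length t = length a" and tn: "\<forall>m<length a. t!m < n"
        using t subD unfolding tuples_def by (auto simp: subset_iff)
      have "\<forall>m<length a. t!m \<noteq> c!(a!m)"
      proof (intro allI impI)
        fix m assume m: "m < length a"
        have "t!m \<noteq> u!m" using match_facts(4)[OF D j, of t u m] t uD m unfolding a_def by auto
        thus "t!m \<noteq> c!(a!m)" using m unfolding u_def by simp
      qed
      hence "measure_pmf.prob H (E \<inter> In t) = 1 / Gr * (1 / P)"
        unfolding E_def In_def Gr_def P_def using probEvIn[OF adist ak tl _ cn cv] tn by auto
      thus "measure_pmf.prob H (E \<inter> In t) \<le> 1 / Gr * (1 / P)" by simp
    qed
  qed
  also have "\<dots> = 1 / Gr * (1 + real (n - 1) / P)"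
    using fD uD cardD by (simp add: card_Diff_singleton algebra_simps)
  also have "\<dots> \<le> 1 / Gr * (1 + real n / P)"
    using Gr_pos Ppos by (intro mult_left_mono add_left_mono divide_right_mono) auto
  finally have main: "T * measure_pmf.prob H (E \<inter> {h. T < real (card (Bsel atoms \<sigma> h j s (D j)))})
        \<le> 1 / Gr * (1 + real n / P)" .
  have Tb: "2 * real (length atoms) * (1 + real n / P) \<le> T" using Tbig j unfolding P_def a_def by auto
  have Lpos: "real (length atoms) > 0" using j by auto
  have "1 / Gr * (1 + real n / P) \<le> 1 / Gr * (T / (2 * real (length atoms)))"
    using Tb Lpos Gr_pos by (intro mult_left_mono) (auto simp: field_simps)
  with main have "T * measure_pmf.prob H (E \<inter> {h. T < real (card (Bsel atoms \<sigma> h j s (D j)))})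
        \<le> T * (1 / (2 * real (length atoms) * Gr))"
    by (simp add: field_simps)
  thus ?thesis unfolding E_def by (subst (asm) mult_le_cancel_left_pos[OF Tpos])
qed


lemma good_bound:
  assumes D: "D \<in> matching_dbs atoms n" and c: "c \<in> answers k atoms D" and s: "s < p"
  shows "1 / (2 * Gr) \<le> measure_pmf.prob H (Ev k c (\<sigma> s) \<inter>
           {h. \<forall>j<length atoms. real (card (Bsel atoms \<sigma> h j s (D j))) \<le> T})"
proof -
  define E where "E = Ev k c (\<sigma> s)"
  define Gd where "Gd = {h. \<forall>j<length atoms. real (card (Bsel atoms \<sigma> h j s (D j))) \<le> T}"
  define Ov where "Ov j = {h. T < real (card (Bsel atoms \<sigma> h j s (D j)))}" for j
  define L where "L = length atoms"
  have Lpos: "real L > 0" using wf unfolding wf_query_def L_def by auto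
  have cn: "\<forall>i<k. c!i < n" using ans_facts(1)[OF wf D c] by auto
  have cv: "\<forall>i<k. \<sigma> s i < g i" using \<sigma>g s by auto
  have PE: "measure_pmf.prob H E = 1 / Gr" unfolding E_def Gr_def by (rule probEv[OF cn cv])
  have sub: "E \<subseteq> (E \<inter> Gd) \<union> (\<Union>j\<in>{..<L}. E \<inter> Ov j)"
    unfolding Gd_def Ov_def L_def by (auto simp: not_le)
  have "1 / Gr = measure_pmf.prob H E" using PE by simp
  also have "\<dots> \<le> measure_pmf.prob H ((E \<inter> Gd) \<union> (\<Union>j\<in>{..<L}. E \<inter> Ov j))"
    using sub by (intro measure_pmf.finite_measure_mono) auto
  also have "\<dots> \<le> measure_pmf.prob H (E \<inter> Gd) + measure_pmf.prob H (\<Union>j\<in>{..<L}. E \<inter> Ov j)"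
    by (rule measure_Un_le) auto
  also have "measure_pmf.prob H (\<Union>j\<in>{..<L}. E \<inter> Ov j) \<le> (\<Sum>j<L. measure_pmf.prob H (E \<inter> Ov j))"
    by (rule measure_pmf.finite_measure_subadditive_finite) auto
  also have "\<dots> \<le> (\<Sum>j<L. 1 / (2 * real L * Gr))"
    by (intro sum_mono) (unfold E_def Ov_def L_def, rule over_bound[OF D c s], simp add: L_def)
  also have "\<dots> = 1 / (2 * Gr)" using Lpos by simp
  finally have "1 / Gr \<le> measure_pmf.prob H (E \<inter> Gd) + 1 / (2 * Gr)" by simp
  thus ?thesis unfolding E_def Gd_def by (simp add: field_simps)
qed

lemma rep_prob_lower:
  assumes D: "D \<in> matching_dbs atoms n" and c: "c \<in> answers k atoms D"
  shows "real p / (2 * Gr) \<le> measure_pmf.prob H {h. c \<in> reported k atoms p (mkF T atoms \<sigma> h) D}"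
proof -
  define A where "A s = Ev k c (\<sigma> s) \<inter> {h. \<forall>j<length atoms. real (card (Bsel atoms \<sigma> h j s (D j))) \<le> T}" for s
  have sub: "(\<Union>s\<in>{..<p}. A s) \<subseteq> {h. c \<in> reported k atoms p (mkF T atoms \<sigma> h) D}"
    unfolding A_def using rep_if[OF wf c] by blast
  have disj: "disjoint_family_on A {..<p}"
    unfolding disjoint_family_on_def
  proof (intro ballI impI)
    fix s s' assume "s \<in> {..<p}" "s' \<in> {..<p}" "s \<noteq> s'"
    then obtain i where "i < k" "\<sigma> s i \<noteq> \<sigma> s' i" using \<sigma>inj by auto
    thus "A s \<inter> A s' = {}" unfolding A_def Ev_def by auto
  qed
  have "real p / (2 * Gr) = (\<Sum>s<p. 1 / (2 * Gr))" by simp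
  also have "\<dots> \<le> (\<Sum>s<p. measure_pmf.prob H (A s))"
    by (intro sum_mono) (unfold A_def, rule good_bound[OF D c], simp)
  also have "\<dots> = measure_pmf.prob H (\<Union>s\<in>{..<p}. A s)"
    by (rule measure_pmf.finite_measure_finite_Union[symmetric]) (use disj in auto)
  also have "\<dots> \<le> measure_pmf.prob H {h. c \<in> reported k atoms p (mkF T atoms \<sigma> h) D}"
    using sub by (intro measure_pmf.finite_measure_mono) auto
  finally show ?thesis .
qed

lemma rep_prob_upper:
  assumes D: "D \<in> matching_dbs atoms n" and c: "c \<in> answers k atoms D"
  shows "measure_pmf.prob H {h. c \<in> reported k atoms p (mkF T atoms \<sigma> h) D} \<le> real p / Gr"
proof -
  have cn: "\<forall>i<k. c!i < n" using ans_facts(1)[OF wf D c] by auto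
  have sub: "{h. c \<in> reported k atoms p (mkF T atoms \<sigma> h) D} \<subseteq> (\<Union>s\<in>{..<p}. Ev k c (\<sigma> s))"
    using rep_imp[OF wf] by blast
  have "measure_pmf.prob H {h. c \<in> reported k atoms p (mkF T atoms \<sigma> h) D}
        \<le> measure_pmf.prob H (\<Union>s\<in>{..<p}. Ev k c (\<sigma> s))"
    using sub by (intro measure_pmf.finite_measure_mono) auto
  also have "\<dots> \<le> (\<Sum>s<p. measure_pmf.prob H (Ev k c (\<sigma> s)))"
    by (rule measure_pmf.finite_measure_subadditive_finite) auto
  also have "\<dots> = (\<Sum>s<p. 1 / Gr)"
    by (intro sum.cong refl) (unfold Gr_def, rule probEv[OF cn], use \<sigma>g in auto)
  also have "\<dots> = real p / Gr" by simp
  finally show ?thesis .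
qed

lemma exp_eq:
  assumes D: "D \<in> matching_dbs atoms n"
  shows "measure_pmf.expectation H (\<lambda>h. real (card (reported k atoms p (mkF T atoms \<sigma> h) D)))
       = (\<Sum>c\<in>answers k atoms D. measure_pmf.prob H {h. c \<in> reported k atoms p (mkF T atoms \<sigma> h) D})"
proof -
  define A where "A = answers k atoms D"
  have fA: "finite A" unfolding A_def by (rule ans_facts(2)[OF wf D])
  have pt: "real (card (reported k atoms p (mkF T atoms \<sigma> h) D))
        = (\<Sum>c\<in>A. indicator {h. c \<in> reported k atoms p (mkF T atoms \<sigma> h) D} h)" for h
  proof -
    define X where "X = reported k atoms p (mkF T atoms \<sigma> h) D"
    have XA: "X \<subseteq> A" unfolding X_def A_def using rep_imp[OF wf] by blast
    have "(\<Sum>c\<in>A. indicator {h. c \<in> reported k atoms p (mkF T atoms \<sigma> h) D} h)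
          = (\<Sum>c\<in>A. if c \<in> X then 1 else (0::real))"
      unfolding X_def indicator_def by (intro sum.cong) auto
    also have "\<dots> = real (card (A \<inter> {c. c \<in> X}))"
      using fA by (simp add: sum.If_cases)
    also have "A \<inter> {c. c \<in> X} = X" using XA by auto
    finally show ?thesis unfolding X_def by simp
  qed
  show ?thesis unfolding pt A_def[symmetric]
    by (subst Bochner_Integration.integral_sum[OF intH]) simp
qed

lemma per_D:
  assumes D: "D \<in> matching_dbs atoms n"
  shows "real (card (answers k atoms D)) * (real p / (2 * Gr))
           \<le> measure_pmf.expectation H (\<lambda>h. real (card (reported k atoms p (mkF T atoms \<sigma> h) D)))"
    and "measure_pmf.expectation H (\<lambda>h. real (card (reported k atoms p (mkF T atoms \<sigma> h) D)))
           \<le> real (card (answers k atoms D)) * (real p / Gr)"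
proof -
  show "real (card (answers k atoms D)) * (real p / (2 * Gr))
           \<le> measure_pmf.expectation H (\<lambda>h. real (card (reported k atoms p (mkF T atoms \<sigma> h) D)))"
    unfolding exp_eq[OF D] using rep_prob_lower[OF D] sum_mono[of "answers k atoms D" "\<lambda>_. real p / (2 * Gr)"]
    by (simp add: mult.commute)
  show "measure_pmf.expectation H (\<lambda>h. real (card (reported k atoms p (mkF T atoms \<sigma> h) D)))
           \<le> real (card (answers k atoms D)) * (real p / Gr)"
    unfolding exp_eq[OF D] using rep_prob_upper[OF D] sum_mono[of "answers k atoms D" _ "\<lambda>_. real p / Gr"]
    by (simp add: mult.commute)
qed

end



lemma MD_fin_ne:
  assumes wf: "wf_query k atoms" and n: "n \<ge> 1"
  shows "finite (matching_dbs atoms n)" "matching_dbs atoms n \<noteq> {}"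
proof -
  define L where "L = length atoms"
  define TT where "TT = (\<Union>j<L. tuples n (length (atoms!j)))"
  have ft: "finite (tuples n r)" for r
  proof -
    have "tuples n r = {xs. set xs \<subseteq> {0..<n} \<and> length xs = r}" unfolding tuples_def by auto
    thus ?thesis by (simp add: finite_lists_length_eq)
  qed
  have fTT: "finite TT" unfolding TT_def using ft by auto
  have "matching_dbs atoms n \<subseteq> {D. \<forall>x. (x \<in> {..<L} \<longrightarrow> D x \<in> Pow TT) \<and> (x \<notin> {..<L} \<longrightarrow> D x = {})}"
    unfolding matching_dbs_def matching_rel_def TT_def L_def by auto
  thus "finite (matching_dbs atoms n)"
    by (rule finite_subset) (intro finite_set_of_finite_funs, auto simp: fTT)
  define D0 where "D0 j = (if j < L then (\<lambda>x. replicate (length (atoms!j)) x) ` {0..<n} else {})" for j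
  have "D0 \<in> matching_dbs atoms n"
    unfolding matching_dbs_def
  proof (intro CollectI conjI allI impI)
    fix j assume j: "length atoms \<le> j" thus "D0 j = {}" unfolding D0_def L_def by auto
  next
    fix j assume j: "j < length atoms"
    define r where "r = length (atoms!j)"
    have rpos: "r > 0" using wf j unfolding wf_query_def r_def by (auto simp: nth_mem)
    have D0j: "D0 j = (\<lambda>x. replicate r x) ` {0..<n}" unfolding D0_def L_def r_def using j by auto
    have inj: "inj_on (\<lambda>x. replicate r x) {0..<n}" using rpos
      by (auto simp: inj_on_def)
    show "matching_rel n (length (atoms!j)) (D0 j)"
      unfolding matching_rel_def r_def[symmetric] D0j
    proof (intro conjI allI impI)
      show "(\<lambda>x. replicate r x) ` {0..<n} \<subseteq> tuples n r" unfolding tuples_def by auto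
      show "card ((\<lambda>x. replicate r x) ` {0..<n}) = n" using card_image[OF inj] by simp
      fix i assume i: "i < r"
      show "bij_betw (\<lambda>t. t ! i) ((\<lambda>x. replicate r x) ` {0..<n}) {0..<n}"
      proof (rule bij_betw_imageI)
        show "inj_on (\<lambda>t. t ! i) ((\<lambda>x. replicate r x) ` {0..<n})"
          using i by (auto simp: inj_on_def)
        show "(\<lambda>t. t ! i) ` (\<lambda>x. replicate r x) ` {0..<n} = {0..<n}"
          using i by (auto simp: image_image)
      qed
    qed
  qed
  thus "matching_dbs atoms n \<noteq> {}" by auto
qed




lemma ceil_bounds:
  assumes "1 \<le> (x::real)"
  shows "x \<le> real (nat \<lceil>x\<rceil>)" "real (nat \<lceil>x\<rceil>) \<le> 2 * x"
proof -
  have cz: "0 \<le> \<lceil>x\<rceil>" using assms by simp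
  have e: "real (nat \<lceil>x\<rceil>) = real_of_int \<lceil>x\<rceil>" using cz by simp
  have a: "x \<le> real_of_int \<lceil>x\<rceil>" and b: "real_of_int \<lceil>x\<rceil> - 1 < x" using ceiling_correct[of x] by auto
  show "x \<le> real (nat \<lceil>x\<rceil>)" using a e by simp
  show "real (nat \<lceil>x\<rceil>) \<le> 2 * x" using b e assms by simp
qed

lemma per_p:
  assumes wf: "wf_query k atoms" and vcov: "frac_vertex_cover atoms v"
    and vsum: "(\<Sum>i<k. v i) = tau_star k atoms"
    and e0: "0 \<le> eps" and e1: "eps < 1"
    and W1: "1 < tau_star k atoms * (1 - eps)"
    and p: "p \<ge> 1" and n: "n \<ge> p"
  shows "\<exists>R. one_round_mpc atoms n p eps (4 * real (length atoms) ^ 2) R \<and>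
           1 / 2 ^ (k+1) * expected_answers k atoms n / real p powr (tau_star k atoms * (1 - eps) - 1)
             \<le> expected_reported k atoms n p R \<and>
           expected_reported k atoms n p R
             \<le> 1 * expected_answers k atoms n / real p powr (tau_star k atoms * (1 - eps) - 1)"
proof -
  define W where "W = tau_star k atoms * (1 - eps)"
  define L where "L = length atoms"
  have Lpos: "L > 0" using wf unfolding wf_query_def L_def by auto
  have v0: "\<And>i. 0 \<le> v i" using vcov unfolding frac_vertex_cover_def by auto
  have vat: "\<And>a. a \<in> set atoms \<Longrightarrow> 1 \<le> (\<Sum>i\<in>set a. v i)" using vcov unfolding frac_vertex_cover_def by auto
  have rp: "real p \<ge> 1" using p by simp
  define w where "w i = (1 - eps) * v i" for i
  have w0: "0 \<le> w i" for i unfolding w_def using v0 e1 by auto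
  define g where "g i = nat \<lceil>real p powr w i\<rceil>" for i
  have pw1: "1 \<le> real p powr w i" for i using ge_one_powr_ge_zero[OF rp w0] .
  have g_lo: "real p powr w i \<le> real (g i)" for i
    unfolding g_def using ceil_bounds(1)[OF pw1[of i]] .
  have g_hi: "real (g i) \<le> 2 * real p powr w i" for i
    unfolding g_def using ceil_bounds(2)[OF pw1[of i]] .
  have g1: "\<forall>i. 1 \<le> g i" 
  proof
    fix i have "1 \<le> real (g i)" using g_lo[of i] pw1[of i] by linarith
    thus "1 \<le> g i" by simp
  qed
  define Gr where "Gr = (\<Prod>i<k. real (g i))"
  have sumw: "(\<Sum>i<k. w i) = W" unfolding w_def W_def using vsum by (simp add: sum_distrib_left[symmetric] sum_distrib_right[symmetric] mult.commute)
  have ppos: "real p > 0" using rp by simp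
  have pW: "real p powr W = (\<Prod>i<k. real p powr w i)" unfolding sumw[symmetric] using ppos by (simp add: powr_sum)
  have Gr_lo: "real p powr W \<le> Gr" unfolding pW Gr_def
    by (intro prod_mono) (use g_lo pw1 in \<open>auto intro: order_trans[OF zero_le_one]\<close>)
  have Gr_hi: "Gr \<le> 2 ^ k * real p powr W"
  proof -
    have "Gr \<le> (\<Prod>i<k. 2 * real p powr w i)" unfolding Gr_def
      by (intro prod_mono) (use g_hi in auto)
    also have "\<dots> = 2 ^ k * real p powr W" unfolding pW by (simp add: prod.distrib)
    finally show ?thesis .
  qed
  have pleW: "real p \<le> real p powr W" using powr_mono[of 1 W "real p"] W1 rp unfolding W_def by simp
  have Grpos: "Gr > 0" 
  proof -
    have "0 < real p powr W" using ppos by simp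
    thus ?thesis using Gr_lo by linarith
  qed
  define CS where "CS = PiE {..<k} (\<lambda>i. {..<g i})"
  have fCS: "finite CS" unfolding CS_def by (intro finite_PiE) auto
  have cardCS: "real (card CS) = Gr" unfolding CS_def Gr_def by (simp add: card_PiE)
  have "p \<le> card CS" 
  proof -
    have "real p \<le> real (card CS)" using pleW Gr_lo cardCS by linarith
    thus ?thesis by simp
  qed
  then obtain \<sigma> where \<sigma>CS: "\<sigma> ` {..<p} \<subseteq> CS" and \<sigma>i: "inj_on \<sigma> {..<p}"
    using card_le_inj[of "{..<p}" CS] fCS by auto
  have \<sigma>g: "\<forall>s<p. \<forall>i<k. \<sigma> s i < g i" using \<sigma>CS unfolding CS_def by (auto simp: PiE_iff)
  have \<sigma>inj: "\<forall>s<p. \<forall>s'<p. s \<noteq> s' \<longrightarrow> (\<exists>i<k. \<sigma> s i \<noteq> \<sigma> s' i)"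
  proof (intro allI impI)
    fix s s' assume s: "s < p" "s' < p" "s \<noteq> s'"
    hence ne: "\<sigma> s \<noteq> \<sigma> s'" using \<sigma>i by (auto simp: inj_on_def)
    have m1: "\<sigma> s \<in> CS" and m2: "\<sigma> s' \<in> CS" using \<sigma>CS s by auto
    show "\<exists>i<k. \<sigma> s i \<noteq> \<sigma> s' i" 
    proof (rule ccontr)
      assume "\<not> (\<exists>i<k. \<sigma> s i \<noteq> \<sigma> s' i)"
      hence "\<sigma> s = \<sigma> s'" using PiE_ext[of "\<sigma> s" "{..<k}" _ "\<sigma> s'"] m1 m2
        unfolding CS_def by auto
      thus False using ne by simp
    qed
  qed
  define q where "q = real p powr (1 - eps)"
  have qpos: "q > 0" unfolding q_def using ppos by simp
  have qn: "q \<le> real n"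
  proof -
    have "q \<le> real p powr 1" unfolding q_def using e0 rp by (intro powr_mono) auto
    thus ?thesis using n rp by simp
  qed
  define T where "T = 4 * real L * real n / q"
  have Tpos: "T > 0" unfolding T_def using Lpos qpos qn by auto
  have Tbig: "\<forall>j<length atoms. 2 * real (length atoms) *
                 (1 + real n / (\<Prod>m<length (atoms!j). real (g (atoms!j!m)))) \<le> T"
  proof (intro allI impI)
    fix j assume j: "j < length atoms"
    define a where "a = atoms!j"
    have aset: "a \<in> set atoms" using j unfolding a_def by simp
    have ad: "distinct a" using wf aset unfolding wf_query_def by auto
    define P where "P = (\<Prod>m<length a. real (g (a!m)))"
    have sv: "(\<Sum>m<length a. w (a!m)) = (1 - eps) * (\<Sum>i\<in>set a. v i)"
    proof -
      have "(\<Sum>i\<in>set a. v i) = (\<Sum>m<length a. v (a!m))"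
      proof -
        have "set a = (\<lambda>m. a!m) ` {..<length a}" by (auto simp: in_set_conv_nth)
        thus ?thesis using ad by (simp add: sum.reindex inj_on_def nth_eq_iff_index_eq)
      qed
      thus ?thesis unfolding w_def by (simp add: sum_distrib_left)
    qed
    have "q \<le> real p powr ((1 - eps) * (\<Sum>i\<in>set a. v i))"
      unfolding q_def using vat[OF aset] e1 rp by (intro powr_mono) auto
    also have "\<dots> = (\<Prod>m<length a. real p powr w (a!m))" unfolding sv[symmetric] using ppos by (simp add: powr_sum)
    also have "\<dots> \<le> P" unfolding P_def
      by (intro prod_mono) (use g_lo pw1 in \<open>auto intro: order_trans[OF zero_le_one]\<close>)
    finally have qP: "q \<le> P" .
    have "real n / P \<le> real n / q" using qP qpos by (intro divide_left_mono) auto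
    moreover have "1 \<le> real n / q" using qn qpos by simp
    ultimately have "1 + real n / P \<le> 2 * (real n / q)" by linarith
    hence "2 * real L * (1 + real n / P) \<le> 2 * real L * (2 * (real n / q))"
      using Lpos by (intro mult_left_mono) auto
    thus "2 * real (length atoms) * (1 + real n / (\<Prod>m<length (atoms!j). real (g (atoms!j!m)))) \<le> T"
      unfolding T_def P_def a_def L_def by simp
  qed
  define R where "R = map_pmf (mkF T atoms \<sigma>) (Hp k n g)"
  have n1: "n \<ge> 1" using n p by simp
  define MD where "MD = matching_dbs atoms n"
  have fMD: "finite MD" and neMD: "MD \<noteq> {}" using MD_fin_ne[OF wf n1] unfolding MD_def by auto
  define EH where "EH D = measure_pmf.expectation (Hp k n g) (\<lambda>h. real (card (reported k atoms p (mkF T atoms \<sigma> h) D)))" for D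
  have ER: "expected_reported k atoms n p R = (\<Sum>D\<in>MD. EH D) / real (card MD)"
    unfolding expected_reported_def R_def EH_def MD_def[symmetric]
    by (subst integral_pmf_of_set[OF neMD fMD]) simp
  have EA: "expected_answers k atoms n = (\<Sum>D\<in>MD. real (card (answers k atoms D))) / real (card MD)"
    unfolding expected_answers_def MD_def[symmetric]
    by (subst integral_pmf_of_set[OF neMD fMD]) simp
  have cMD: "real (card MD) > 0" using fMD neMD by (simp add: card_gt_0_iff)
  have lo: "real (card (answers k atoms D)) * (real p / (2 * Gr)) \<le> EH D" if D: "D \<in> MD" for D
    using per_D(1)[OF wf g1 \<sigma>g \<sigma>inj Tpos Tbig, of D] D unfolding MD_def EH_def Gr_def by (simp add: Submission.Gr_def[OF wf g1 \<sigma>g \<sigma>inj Tpos Tbig])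
  have hi: "EH D \<le> real (card (answers k atoms D)) * (real p / Gr)" if D: "D \<in> MD" for D
    using per_D(2)[OF wf g1 \<sigma>g \<sigma>inj Tpos Tbig, of D] D unfolding MD_def EH_def Gr_def by (simp add: Submission.Gr_def[OF wf g1 \<sigma>g \<sigma>inj Tpos Tbig])
  define A where "A = expected_answers k atoms n"
  have A0: "A \<ge> 0" unfolding A_def EA using cMD by (intro divide_nonneg_pos sum_nonneg) auto
  have ERlo: "A * (real p / (2 * Gr)) \<le> expected_reported k atoms n p R"
  proof -
    have "A * (real p / (2 * Gr)) = (\<Sum>D\<in>MD. real (card (answers k atoms D)) * (real p / (2 * Gr))) / real (card MD)"
      unfolding A_def EA sum_distrib_right[symmetric] by simp
    also have "\<dots> \<le> (\<Sum>D\<in>MD. EH D) / real (card MD)"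
      using cMD by (intro divide_right_mono sum_mono lo) auto
    finally show ?thesis unfolding ER .
  qed
  have ERhi: "expected_reported k atoms n p R \<le> A * (real p / Gr)"
  proof -
    have "(\<Sum>D\<in>MD. EH D) / real (card MD) \<le> (\<Sum>D\<in>MD. real (card (answers k atoms D)) * (real p / Gr)) / real (card MD)"
      using cMD by (intro divide_right_mono sum_mono hi) auto
    also have "\<dots> = A * (real p / Gr)"
      unfolding A_def EA sum_distrib_right[symmetric] by simp
    finally show ?thesis unfolding ER .
  qed
  have pWm: "real p powr (W - 1) = real p powr W / real p" using ppos by (simp add: powr_diff)
  have pWpos: "real p powr W > 0" using ppos by simp
  have c1: "1 / 2 ^ (k+1) * A / real p powr (W - 1) \<le> A * (real p / (2 * Gr))"
  proof -
    have "1 / 2 ^ (k+1) * A / real p powr (W - 1) = A * (real p / (2 * (2^k * real p powr W)))"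
      unfolding pWm using ppos pWpos by (simp add: field_simps)
    also have "\<dots> \<le> A * (real p / (2 * Gr))"
      using Gr_hi Grpos ppos A0 by (intro mult_left_mono divide_left_mono) auto
    finally show ?thesis .
  qed
  have c2: "A * (real p / Gr) \<le> 1 * A / real p powr (W - 1)"
  proof -
    have "A * (real p / Gr) \<le> A * (real p / real p powr W)"
      using Gr_lo Grpos ppos A0 pWpos by (intro mult_left_mono divide_left_mono) (auto simp: Grpos pWpos)
    also have "\<dots> = 1 * A / real p powr (W - 1)" unfolding pWm using ppos pWpos by (simp add: field_simps)
    finally show ?thesis .
  qed
  have mpc: "one_round_mpc atoms n p eps (4 * real (length atoms) ^ 2) R"
    unfolding one_round_mpc_def
  proof (intro conjI ballI e0 e1 allI impI)
    fix F assume "F \<in> set_pmf R"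
    then obtain h where F: "F = mkF T atoms \<sigma> h" unfolding R_def by auto
    fix j s S show "F j s S \<subseteq> S" unfolding F mkF_def Bsel_def by auto
  next
    fix F assume "F \<in> set_pmf R"
    then obtain h where F: "F = mkF T atoms \<sigma> h" unfolding R_def by auto
    fix D s
    have each: "real (card (F j s S)) \<le> T" for j S
      unfolding F mkF_def using Tpos by auto
    have "real (\<Sum>j<length atoms. card (F j s (D j))) = (\<Sum>j<length atoms. real (card (F j s (D j))))"
      by simp
    also have "\<dots> \<le> (\<Sum>j<length atoms. T)" by (intro sum_mono each)
    also have "\<dots> = 4 * real (length atoms) ^ 2 * real n / real p powr (1 - eps)"
      unfolding T_def q_def L_def by (simp add: power2_eq_square)
    finally show "real (\<Sum>j<length atoms. card (F j s (D j))) \<le> 4 * real (length atoms) ^ 2 * real n / real p powr (1 - eps)" .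
  qed
  show ?thesis
    using mpc ERlo ERhi c1 c2 unfolding A_def W_def by (intro exI[of _ R]) auto
qed




theorem proposition2:
  fixes k :: nat and atoms :: "nat list list" and eps :: real
  assumes "wf_query k atoms"
    and "connected_query k atoms"
    and "0 \<le> eps"
    and "eps < 1 - 1 / tau_star k atoms"
  shows "\<exists>C>0. \<exists>c1>0. \<exists>c2>0. \<forall>p::nat. p \<ge> 1 \<longrightarrow> (\<exists>n0. \<forall>n\<ge>n0. \<exists>R.
           one_round_mpc atoms n p eps C R \<and>
           c1 * expected_answers k atoms n / real p powr (tau_star k atoms * (1 - eps) - 1)
             \<le> expected_reported k atoms n p R \<and>
           expected_reported k atoms n p R
             \<le> c2 * expected_answers k atoms n / real p powr (tau_star k atoms * (1 - eps) - 1))"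
proof -
  note wf = assms(1)
  obtain v where vcov: "frac_vertex_cover atoms v" and vsum: "(\<Sum>i<k. v i) = tau_star k atoms"
    using tau_attained[OF wf] by blast
  have ane: "atoms \<noteq> []" using wf unfolding wf_query_def by auto
  define a where "a = hd atoms"
  have aset: "a \<in> set atoms" unfolding a_def using ane by simp
  have ak: "set a \<subseteq> {..<k}" using wf aset unfolding wf_query_def atLeast0LessThan by auto
  have v0: "\<And>i. 0 \<le> v i" using vcov unfolding frac_vertex_cover_def by auto
  have "1 \<le> (\<Sum>i\<in>set a. v i)" using vcov aset unfolding frac_vertex_cover_def by auto
  also have "\<dots> \<le> (\<Sum>i<k. v i)" using ak v0 by (intro sum_mono2) auto
  finally have tau1: "1 \<le> tau_star k atoms" using vsum by simp
  have e1: "eps < 1" using assms(4) tau1 by (smt (verit) divide_pos_pos)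
  have W1: "1 < tau_star k atoms * (1 - eps)"
  proof -
    have "1 / tau_star k atoms < 1 - eps" using assms(4) by simp
    hence "1 < (1 - eps) * tau_star k atoms" using tau1 by (simp add: divide_less_eq)
    thus ?thesis by (simp add: mult.commute)
  qed
  have L0: "0 < 4 * real (length atoms) ^ 2" using ane by simp
  have main: "\<forall>p::nat. p \<ge> 1 \<longrightarrow> (\<exists>n0. \<forall>n\<ge>n0. \<exists>R.
           one_round_mpc atoms n p eps (4 * real (length atoms) ^ 2) R \<and>
           1 / 2 ^ (k+1) * expected_answers k atoms n / real p powr (tau_star k atoms * (1 - eps) - 1)
             \<le> expected_reported k atoms n p R \<and>
           expected_reported k atoms n p R
             \<le> 1 * expected_answers k atoms n / real p powr (tau_star k atoms * (1 - eps) - 1))"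
    using per_p[OF wf vcov vsum assms(3) e1 W1] by blast
  show ?thesis
    apply (rule exI[of _ "4 * real (length atoms) ^ 2"])
    apply (intro conjI L0)
    apply (rule exI[of _ "1 / 2 ^ (k+1)"])
    apply (intro conjI)
     apply simp
    apply (rule exI[of _ 1])
    using main by simp
qed


end
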